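(* Let $G$ be a prime tournament and $u\in V(G)$. Let $H_1,H_2$ be prime subtournaments of $G$ such that $V(H_1)\cup V(H_2)=V(G)\setminus\{u\}$, the subtournaments $H_1+u$ and $H_2+u$ are decomposable, and the subtournament $H_{1,2}$ induced on $V(H_1)\cap V(H_2)$ is prime with $|V(H_{1,2})|\ge 3$. Then either $u\in V_x(H_1)$ for some $x\in V(H_1)\setminus V(H_2)$, or $u\in V_y(H_2)$ for some $y\in V(H_2)\setminus V(H_1)$.
   Context: A tournament is a finite, non-null, loopless directed graph in which for any two distinct vertices $u,v$ there is exactly one edge with both ends in $\{u,v\}$. A subtournament is the tournament induced on a nonempty vertex subset; for a subtournament $H$ of $G$ and $v\in V(G)$, $H+v$ is the subtournament induced on $V(H)\cup\{v\}$. A homogeneous set of a tournament $G$ is a set $X\subseteq V(G)$ such that each vertex outside $X$ either has edges to all of $X$ or edges from all of $X$; it is nontrivial if $1<|X|<|V(G)|$. A tournament is prime if it has no nontrivial homogeneous set, and decomposable otherwise. For a subtournament $H$ of $G$ and $x\in V(H)$, $V_x(H)$ is the set of vertices $v\in V(G)\setminus V(H)$ such that $\{v,x\}$ is a homogeneous set of $H+v$. *)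

theory Defs
  imports Main
begin

definition tournament :: "'a set \<Rightarrow> ('a \<times> 'a) set \<Rightarrow> bool" where
  "tournament V E \<longleftrightarrow> finite V \<and> V \<noteq> {} \<and> E \<subseteq> V \<times> V \<and>
     (\<forall>v. (v, v) \<notin> E) \<and>
     (\<forall>u\<in>V. \<forall>v\<in>V. u \<noteq> v \<longrightarrow> ((u, v) \<in> E \<longleftrightarrow> (v, u) \<notin> E))"

(* The subtournament induced on S is (S, E \<inter> S \<times> S).  Since the notions below only
   look at edges between vertices of S, we evaluate them with vertex set S. *)

definition homogeneous :: "'a set \<Rightarrow> ('a \<times> 'a) set \<Rightarrow> 'a set \<Rightarrow> bool" where
  "homogeneous S E X \<longleftrightarrow> X \<subseteq> S \<and>
     (\<forall>v\<in>S - X. (\<forall>x\<in>X. (v, x) \<in> E) \<or> (\<forall>x\<in>X. (x, v) \<in> E))"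

definition prime_tour :: "'a set \<Rightarrow> ('a \<times> 'a) set \<Rightarrow> bool" where
  "prime_tour S E \<longleftrightarrow>
     \<not> (\<exists>X. homogeneous S E X \<and> 1 < card X \<and> card X < card S)"

definition decomposable :: "'a set \<Rightarrow> ('a \<times> 'a) set \<Rightarrow> bool" where
  "decomposable S E \<longleftrightarrow> \<not> prime_tour S E"

definition Vx :: "'a set \<Rightarrow> ('a \<times> 'a) set \<Rightarrow> 'a set \<Rightarrow> 'a \<Rightarrow> 'a set" where
  "Vx V E H x = {v \<in> V - H. homogeneous (insert v H) E {v, x}}"

end

theory Submission
  imports Defs
begin

lemma tour_asym:
  assumes "tournament V E" "(a,b) \<in> E" shows "(b,a) \<notin> E"
proof
  assume "(b,a) \<in> E"
  have "a \<in> V" "b \<in> V" using assms unfolding tournament_def by blast+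
  moreover have "a \<noteq> b" using assms unfolding tournament_def by auto
  ultimately show False using assms \<open>(b,a) \<in> E\<close> unfolding tournament_def by blast
qed

lemma homog_restrict:
  assumes "homogeneous S E X" "T \<subseteq> S" shows "homogeneous T E (X \<inter> T)"
  using assms unfolding homogeneous_def by blast

lemma prime_ext:
  assumes fin: "finite H" and vH: "v \<notin> H" and pH: "prime_tour H E"
    and dec: "decomposable (insert v H) E"
  shows "(\<forall>w\<in>H. (v,w)\<in>E) \<or> (\<forall>w\<in>H. (w,v)\<in>E) \<or> (\<exists>x\<in>H. homogeneous (insert v H) E {v,x})"
proof -
  from dec obtain X where X: "homogeneous (insert v H) E X" "1 < card X" "card X < card (insert v H)"
    unfolding decomposable_def prime_tour_def by blast
  have cI: "card (insert v H) = card H + 1" using fin vH by simp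
  have XS: "X \<subseteq> insert v H" using X(1) unfolding homogeneous_def by blast
  have finX: "finite X" using XS fin finite_subset by blast
  show ?thesis
  proof (cases "v \<in> X")
    case False
    hence "X \<subseteq> H" using XS by blast
    hence XH: "X \<inter> H = X" by blast
    have "homogeneous H E X" using homog_restrict[OF X(1), of H] XH by auto
    hence "\<not> card X < card H" using pH X(2) unfolding prime_tour_def by blast
    hence "X = H" using \<open>X \<subseteq> H\<close> fin by (meson card_mono card_subset_eq le_antisym not_less)
    hence "homogeneous (insert v H) E H" using X(1) by simp
    thus ?thesis unfolding homogeneous_def using vH by auto
  next
    case True
    have XH: "X \<inter> H = X - {v}" using XS vH by blast
    have h: "homogeneous H E (X - {v})" using homog_restrict[OF X(1), of H] XH by auto
    have c: "card (X - {v}) = card X - 1" using True finX by simp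
    hence "card (X - {v}) < card H" using X cI by simp
    hence "\<not> 1 < card (X - {v})" using pH h unfolding prime_tour_def by blast
    hence "card (X - {v}) = 1" using c X(2) by simp
    then obtain x where x: "X - {v} = {x}" by (meson card_1_singletonE)
    hence "X = {v,x}" using True by blast
    moreover have "x \<in> H" using x XS vH by blast
    ultimately show ?thesis using X(1) by blast
  qed
qed

lemma uniform_contra:
  assumes T: "tournament V E" and I: "prime_tour I E" "card I \<ge> 3" "finite I"
    and x: "x \<in> I" and u: "u \<notin> I"
    and h: "homogeneous (insert u I) E {u,x}"
    and uni: "(\<forall>w\<in>I. (u,w)\<in>E) \<or> (\<forall>w\<in>I. (w,u)\<in>E)"
  shows False
proof -
  have hx: "\<forall>w\<in>I - {x}. ((w,u)\<in>E \<and> (w,x)\<in>E) \<or> ((u,w)\<in>E \<and> (x,w)\<in>E)"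
    using h u unfolding homogeneous_def by auto
  have "homogeneous I E (I - {x})"
  proof -
    have "(\<forall>w\<in>I-{x}. (x,w)\<in>E) \<or> (\<forall>w\<in>I-{x}. (w,x)\<in>E)"
      using uni hx tour_asym[OF T] by blast
    thus ?thesis unfolding homogeneous_def using x by auto
  qed
  moreover have "card (I - {x}) = card I - 1" using x I by simp
  ultimately show False using I x unfolding prime_tour_def by fastforce
qed

lemma two_pairs:
  assumes T: "tournament V E" and I: "prime_tour I E" "card I \<ge> 3" "finite I"
    and x: "x \<in> I" and y: "y \<in> I" and xy: "x \<noteq> y" and u: "u \<notin> I"
    and hx: "homogeneous (insert u I) E {u,x}"
    and hy: "homogeneous (insert u I) E {u,y}"
  shows False
proof -
  have a: "\<forall>w\<in>I - {x}. ((w,u)\<in>E \<and> (w,x)\<in>E) \<or> ((u,w)\<in>E \<and> (x,w)\<in>E)"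
    using hx u unfolding homogeneous_def by auto
  have b: "\<forall>w\<in>I - {y}. ((w,u)\<in>E \<and> (w,y)\<in>E) \<or> ((u,w)\<in>E \<and> (y,w)\<in>E)"
    using hy u unfolding homogeneous_def by auto
  have "\<forall>w\<in>I - {x,y}. ((w,x)\<in>E \<and> (w,y)\<in>E) \<or> ((x,w)\<in>E \<and> (y,w)\<in>E)"
    using a b tour_asym[OF T] by blast
  hence "homogeneous I E {x,y}" unfolding homogeneous_def using x y by auto
  moreover have "card {x,y} = 2" using xy by simp
  ultimately show False using I unfolding prime_tour_def by fastforce
qed

theorem proposition3p6:
  fixes V :: "'a set" and E :: "('a \<times> 'a) set" and u :: 'a
    and H1 H2 :: "'a set"
  assumes "tournament V E"
    and "prime_tour V E"
    and "u \<in> V"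
    and "H1 \<subseteq> V" and "H1 \<noteq> {}" and "H2 \<subseteq> V" and "H2 \<noteq> {}"
    and "prime_tour H1 E" and "prime_tour H2 E"
    and "H1 \<union> H2 = V - {u}"
    and "decomposable (insert u H1) E" and "decomposable (insert u H2) E"
    and "prime_tour (H1 \<inter> H2) E" and "card (H1 \<inter> H2) \<ge> 3"
  shows "(\<exists>x\<in>H1 - H2. u \<in> Vx V E H1 x) \<or> (\<exists>y\<in>H2 - H1. u \<in> Vx V E H2 y)"
proof (rule ccontr)
  assume neg: "\<not> ?thesis"
  note T = assms(1)
  have finV: "finite V" using T unfolding tournament_def by blast
  have f1: "finite H1" "finite H2" using assms(4,6) finV finite_subset by auto
  have u1: "u \<notin> H1" and u2: "u \<notin> H2" using assms(10) by blast+
  define I where "I = H1 \<inter> H2"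
  have fI: "finite I" using f1 I_def by simp
  have pI: "prime_tour I E" "card I \<ge> 3" using assms(13,14) I_def by auto
  have uI: "u \<notin> I" using u1 I_def by simp
  have Vdef: "V = insert u (H1 \<union> H2)" using assms(3,10) by blast
  have cV: "card V = card (H1 \<union> H2) + 1" using Vdef u1 u2 f1 by simp
  have cU: "card (H1 \<union> H2) \<ge> card I" using f1 I_def by (intro card_mono) auto
  have nV: "\<not> (\<exists>X. homogeneous V E X \<and> 1 < card X \<and> card X < card V)"
    using assms(2) unfolding prime_tour_def by blast
  have hr: "homogeneous (insert u I) E {u,x}" if "homogeneous (insert u H) E {u,x}" "I \<subseteq> H" "x \<in> I" for H x
    using homog_restrict[OF that(1), of "insert u I"] that by (metis Int_absorb2 empty_subsetI insert_mono insert_subset)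
  have c1: "(\<forall>w\<in>H1. (u,w)\<in>E) \<or> (\<forall>w\<in>H1. (w,u)\<in>E) \<or> (\<exists>x\<in>I. homogeneous (insert u H1) E {u,x})"
  proof -
    have "\<not> (\<exists>x\<in>H1 - H2. homogeneous (insert u H1) E {u,x})"
      using neg assms(3) u1 unfolding Vx_def by auto
    thus ?thesis using prime_ext[OF f1(1) u1 assms(8,11)] I_def by blast
  qed
  have c2: "(\<forall>w\<in>H2. (u,w)\<in>E) \<or> (\<forall>w\<in>H2. (w,u)\<in>E) \<or> (\<exists>x\<in>I. homogeneous (insert u H2) E {u,x})"
  proof -
    have "\<not> (\<exists>x\<in>H2 - H1. homogeneous (insert u H2) E {u,x})"
      using neg assms(3) u2 unfolding Vx_def by auto
    thus ?thesis using prime_ext[OF f1(2) u2 assms(9,12)] I_def by blast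
  qed
  show False
  proof (cases "\<exists>x\<in>I. homogeneous (insert u H1) E {u,x}")
    case True
    then obtain x where x: "x \<in> I" "homogeneous (insert u H1) E {u,x}" by blast
    have hx: "homogeneous (insert u I) E {u,x}" using hr[OF x(2) _ x(1)] I_def by blast
    show False
    proof (cases "\<exists>y\<in>I. homogeneous (insert u H2) E {u,y}")
      case True
      then obtain y where y: "y \<in> I" "homogeneous (insert u H2) E {u,y}" by blast
      have hy: "homogeneous (insert u I) E {u,y}" using hr[OF y(2) _ y(1)] I_def by blast
      show False
      proof (cases "x = y")
        case False
        show False using two_pairs[OF T pI fI x(1) y(1) False uI hx hy] .
      next
        case True
        have "homogeneous V E {u,x}"
          using x(2) y(2) True Vdef x(1) I_def unfolding homogeneous_def by auto
        moreover have "card {u,x} = 2" using uI x(1) by (metis card_2_iff)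
        ultimately show False using nV cV cU pI by fastforce
      qed
    next
      case False
      hence "(\<forall>w\<in>I. (u,w)\<in>E) \<or> (\<forall>w\<in>I. (w,u)\<in>E)" using c2 I_def by blast
      thus False using uniform_contra[OF T pI fI x(1) uI hx] by blast
    qed
  next
    case False
    hence U1: "(\<forall>w\<in>H1. (u,w)\<in>E) \<or> (\<forall>w\<in>H1. (w,u)\<in>E)" using c1 by blast
    show False
    proof (cases "\<exists>y\<in>I. homogeneous (insert u H2) E {u,y}")
      case True
      then obtain y where y: "y \<in> I" "homogeneous (insert u H2) E {u,y}" by blast
      have hy: "homogeneous (insert u I) E {u,y}" using hr[OF y(2) _ y(1)] I_def by blast
      have "(\<forall>w\<in>I. (u,w)\<in>E) \<or> (\<forall>w\<in>I. (w,u)\<in>E)" using U1 I_def by blast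
      thus False using uniform_contra[OF T pI fI y(1) uI hy] by blast
    next
      case False
      hence U2: "(\<forall>w\<in>H2. (u,w)\<in>E) \<or> (\<forall>w\<in>H2. (w,u)\<in>E)" using c2 by blast
      have Ine: "I \<noteq> {}" using pI by auto
      then obtain w where w: "w \<in> H1" "w \<in> H2" using I_def by blast
      have same: "(\<forall>w\<in>H1 \<union> H2. (u,w)\<in>E) \<or> (\<forall>w\<in>H1 \<union> H2. (w,u)\<in>E)"
        using U1 U2 w tour_asym[OF T] by blast
      have "homogeneous V E (H1 \<union> H2)"
        using same Vdef unfolding homogeneous_def by auto
      moreover have "1 < card (H1 \<union> H2)" "card (H1 \<union> H2) < card V" using cV cU pI by auto
      ultimately show False using nV by blast
    qed
  qed
qed

end
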